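(* Let $(X,D)$ be a JS-metric space with a partial order $\le$ and let $F:X^2\to X$ have the mixed monotone property and satisfy, for some $k\in[0,1)$, $D(F(x,y),F(u,v))+D(F(y,x),F(v,u))\le k[D(x,u)+D(y,v)]$ for all $x\ge u$, $y\le v$. Let $w$ and $\tilde z$ be coupled fixed points of $F$ that are incomparable in $X^2$, and suppose there exists $z^*\in X^2$ which is an upper bound or a lower bound of both $w$ and $\tilde z$ in $X^2$, with $D_+(w,z^* )<\infty$ and $D_+(\tilde z,z^* )<\infty$. Then $w=\tilde z$.
   Context: Arithmetic is carried out in the extended reals. $(X,D)$ is a JS-metric space: $D:X\times X\to[0,\infty]$ satisfies (D1) $D(x,y)=0\Rightarrow x=y$; (D2) $D(x,y)=D(y,x)$; (D3) there exists $c>0$ such that for all $x,y\in X$ and every sequence $(x_n)$ with $\lim_n D(x_n,x)=0$, $D(x,y)\le c\limsup_n D(x_n,y)$. $D_+((x,y),(u,v))=D(x,u)+D(y,v)$. Partial order on $X^2$: $(u,v)\le(x,y)\iff u\le x$ and $v\ge y$; comparable means one is $\le$ the other. Mixed monotone property: $x_1\le x_2\Rightarrow F(x_1,y)\le F(x_2,y)$ and $y_1\le y_2\Rightarrow F(x,y_1)\ge F(x,y_2)$. A coupled fixed point is $(x,y)$ with $x=F(x,y)$, $y=F(y,x)$. *)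

theory Defs
  imports "HOL-Analysis.Analysis"
begin

definition JS_metric :: "('a \<Rightarrow> 'a \<Rightarrow> ennreal) \<Rightarrow> bool" where
  "JS_metric D \<longleftrightarrow>
     (\<forall>x y. D x y = 0 \<longrightarrow> x = y) \<and>
     (\<forall>x y. D x y = D y x) \<and>
     (\<exists>c::real. c > 0 \<and>
        (\<forall>x y (xs :: nat \<Rightarrow> 'a). (\<lambda>n. D (xs n) x) \<longlonglongrightarrow> 0 \<longrightarrow>
             D x y \<le> ennreal c * limsup (\<lambda>n. D (xs n) y)))"

definition D_plus :: "('a \<Rightarrow> 'a \<Rightarrow> ennreal) \<Rightarrow> 'a \<times> 'a \<Rightarrow> 'a \<times> 'a \<Rightarrow> ennreal" where
  "D_plus D p q = D (fst p) (fst q) + D (snd p) (snd q)"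

definition le2 :: "'a::order \<times> 'a \<Rightarrow> 'a \<times> 'a \<Rightarrow> bool" where
  "le2 p q \<longleftrightarrow> fst p \<le> fst q \<and> snd q \<le> snd p"

definition comparable2 :: "'a::order \<times> 'a \<Rightarrow> 'a \<times> 'a \<Rightarrow> bool" where
  "comparable2 p q \<longleftrightarrow> le2 p q \<or> le2 q p"

definition mixed_monotone :: "('a::order \<Rightarrow> 'a \<Rightarrow> 'a) \<Rightarrow> bool" where
  "mixed_monotone F \<longleftrightarrow>
     (\<forall>x1 x2 y. x1 \<le> x2 \<longrightarrow> F x1 y \<le> F x2 y) \<and>
     (\<forall>x y1 y2. y1 \<le> y2 \<longrightarrow> F x y2 \<le> F x y1)"

definition coupled_fixed_point :: "('a \<Rightarrow> 'a \<Rightarrow> 'a) \<Rightarrow> 'a \<times> 'a \<Rightarrow> bool" where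
  "coupled_fixed_point F p \<longleftrightarrow> fst p = F (fst p) (snd p) \<and> snd p = F (snd p) (fst p)"

end

theory Submission
  imports Defs
begin

primrec itF :: "('a \<Rightarrow> 'a \<Rightarrow> 'a) \<Rightarrow> 'a \<times> 'a \<Rightarrow> nat \<Rightarrow> 'a \<times> 'a" where
  "itF F s 0 = s"
| "itF F s (Suc n) = (F (fst (itF F s n)) (snd (itF F s n)), F (snd (itF F s n)) (fst (itF F s n)))"

lemma geo_conv:
  fixes d :: "nat \<Rightarrow> ennreal"
  assumes step: "\<And>n. d (Suc n) \<le> ennreal k * d n" and fin: "d 0 < \<infinity>" and k: "0 \<le> k" "k < 1"
  shows "d \<longlonglongrightarrow> 0"
proof -
  have b: "d n \<le> ennreal (k ^ n) * d 0" for n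
  proof (induction n)
    case 0 then show ?case by simp
  next
    case (Suc n)
    have "d (Suc n) \<le> ennreal k * d n" by (rule step)
    also have "\<dots> \<le> ennreal k * (ennreal (k ^ n) * d 0)" using Suc by (intro mult_left_mono) auto
    also have "\<dots> = ennreal (k ^ Suc n) * d 0" using k by (simp add: ennreal_mult mult.assoc)
    finally show ?case .
  qed
  obtain r where r: "d 0 = ennreal r" "0 \<le> r" using fin by (cases "d 0") auto
  have "(\<lambda>n. k ^ n * r) \<longlonglongrightarrow> 0 * r"
    by (intro tendsto_mult LIMSEQ_power_zero tendsto_const) (use k in auto)
  hence "(\<lambda>n. ennreal (k ^ n * r)) \<longlonglongrightarrow> ennreal 0" 
    by (intro tendsto_ennrealI) simp
  hence t: "(\<lambda>n. ennreal (k ^ n) * d 0) \<longlonglongrightarrow> 0" using r k by (simp add: ennreal_mult)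
  show ?thesis
    by (rule tendsto_sandwich[OF _ _ tendsto_const t]) (use b in auto)
qed

lemma uniq:
  assumes js: "JS_metric D" and a2: "(\<lambda>n. D (a n) p) \<longlonglongrightarrow> 0" and a3: "(\<lambda>n. D (a n) q) \<longlonglongrightarrow> 0"
  shows "p = q"
proof -
  from js obtain c :: real where c: "c > 0" and c2: "\<And>x y (xs :: nat \<Rightarrow> _). (\<lambda>n. D (xs n) x) \<longlonglongrightarrow> 0 \<Longrightarrow>
             D x y \<le> ennreal c * limsup (\<lambda>n. D (xs n) y)"
    unfolding JS_metric_def by metis
  have d1: "\<And>x y. D x y = 0 \<Longrightarrow> x = y" using js unfolding JS_metric_def by metis
  have "D p q \<le> ennreal c * limsup (\<lambda>n. D (a n) q)" by (rule c2[OF a2])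
  also have "limsup (\<lambda>n. D (a n) q) = 0" using a3 by (simp add: lim_imp_Limsup)
  finally show ?thesis using d1 by simp
qed

lemma up_case:
  fixes D :: "'a::order \<Rightarrow> 'a \<Rightarrow> ennreal"
  assumes js: "JS_metric D" and mm: "mixed_monotone F" and k: "0 \<le> k" "k < 1"
    and con: "\<forall>x y u v. u \<le> x \<and> y \<le> v \<longrightarrow>
           D (F x y) (F u v) + D (F y x) (F v u) \<le> ennreal k * (D x u + D y v)"
    and cf: "coupled_fixed_point F p" and le: "le2 p zs" and fin: "D_plus D p zs < \<infinity>"
  shows "(\<lambda>n. D (fst (itF F zs n)) (fst p)) \<longlonglongrightarrow> 0 \<and> (\<lambda>n. D (snd (itF F zs n)) (snd p)) \<longlonglongrightarrow> 0"
proof -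
  have sym: "\<And>x y. D x y = D y x" using js unfolding JS_metric_def by blast
  obtain p1 p2 where p: "p = (p1, p2)" by fastforce
  have fp: "F p1 p2 = p1" "F p2 p1 = p2" using cf p unfolding coupled_fixed_point_def by auto
  have m1: "\<And>x1 x2 y. x1 \<le> x2 \<Longrightarrow> F x1 y \<le> F x2 y" and m2: "\<And>x y1 y2. y1 \<le> y2 \<Longrightarrow> F x y2 \<le> F x y1"
    using mm unfolding mixed_monotone_def by auto
  have ord: "p1 \<le> fst (itF F zs n) \<and> snd (itF F zs n) \<le> p2" for n
  proof (induction n)
    case 0 then show ?case using le p unfolding le2_def by auto
  next
    case (Suc n)
    let ?a = "fst (itF F zs n)" and ?b = "snd (itF F zs n)"
    have "p1 = F p1 p2" using fp by simp
    also have "\<dots> \<le> F ?a p2" using Suc by (intro m1) auto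
    also have "\<dots> \<le> F ?a ?b" using Suc by (intro m2) auto
    finally have A: "p1 \<le> F ?a ?b" .
    have "F ?b ?a \<le> F p2 ?a" using Suc by (intro m1) auto
    also have "\<dots> \<le> F p2 p1" using Suc by (intro m2) auto
    also have "\<dots> = p2" using fp by simp
    finally have B: "F ?b ?a \<le> p2" .
    show ?case using A B by simp
  qed
  define d where "d n = D (fst (itF F zs n)) p1 + D (snd (itF F zs n)) p2" for n
  have step: "d (Suc n) \<le> ennreal k * d n" for n
  proof -
    let ?a = "fst (itF F zs n)" and ?b = "snd (itF F zs n)"
    have "D (F ?a ?b) (F p1 p2) + D (F ?b ?a) (F p2 p1) \<le> ennreal k * (D ?a p1 + D ?b p2)"
      using con ord[of n] by blast
    thus ?thesis unfolding d_def using fp by simp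
  qed
  have d0: "d 0 < \<infinity>" using fin p unfolding d_def D_plus_def by (simp add: sym)
  have dc: "d \<longlonglongrightarrow> 0" by (rule geo_conv[OF step d0 k])
  show ?thesis unfolding p fst_conv snd_conv
    by (intro conjI; rule tendsto_sandwich[OF _ _ tendsto_const dc]) (auto simp: d_def)
qed

lemma down_case:
  fixes D :: "'a::order \<Rightarrow> 'a \<Rightarrow> ennreal"
  assumes js: "JS_metric D" and mm: "mixed_monotone F" and k: "0 \<le> k" "k < 1"
    and con: "\<forall>x y u v. u \<le> x \<and> y \<le> v \<longrightarrow>
           D (F x y) (F u v) + D (F y x) (F v u) \<le> ennreal k * (D x u + D y v)"
    and cf: "coupled_fixed_point F p" and le: "le2 zs p" and fin: "D_plus D p zs < \<infinity>"
  shows "(\<lambda>n. D (fst (itF F zs n)) (fst p)) \<longlonglongrightarrow> 0 \<and> (\<lambda>n. D (snd (itF F zs n)) (snd p)) \<longlonglongrightarrow> 0"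
proof -
  have sym: "\<And>x y. D x y = D y x" using js unfolding JS_metric_def by blast
  obtain p1 p2 where p: "p = (p1, p2)" by fastforce
  have fp: "F p1 p2 = p1" "F p2 p1 = p2" using cf p unfolding coupled_fixed_point_def by auto
  have m1: "\<And>x1 x2 y. x1 \<le> x2 \<Longrightarrow> F x1 y \<le> F x2 y" and m2: "\<And>x y1 y2. y1 \<le> y2 \<Longrightarrow> F x y2 \<le> F x y1"
    using mm unfolding mixed_monotone_def by auto
  have ord: "fst (itF F zs n) \<le> p1 \<and> p2 \<le> snd (itF F zs n)" for n
  proof (induction n)
    case 0 then show ?case using le p unfolding le2_def by auto
  next
    case (Suc n)
    let ?a = "fst (itF F zs n)" and ?b = "snd (itF F zs n)"
    have "F ?a ?b \<le> F p1 ?b" using Suc by (intro m1) auto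
    also have "\<dots> \<le> F p1 p2" using Suc by (intro m2) auto
    also have "\<dots> = p1" using fp by simp
    finally have A: "F ?a ?b \<le> p1" .
    have "p2 = F p2 p1" using fp by simp
    also have "\<dots> \<le> F ?b p1" using Suc by (intro m1) auto
    also have "\<dots> \<le> F ?b ?a" using Suc by (intro m2) auto
    finally have B: "p2 \<le> F ?b ?a" .
    show ?case using A B by simp
  qed
  define d where "d n = D (fst (itF F zs n)) p1 + D (snd (itF F zs n)) p2" for n
  have step: "d (Suc n) \<le> ennreal k * d n" for n
  proof -
    let ?a = "fst (itF F zs n)" and ?b = "snd (itF F zs n)"
    have "D (F p1 p2) (F ?a ?b) + D (F p2 p1) (F ?b ?a) \<le> ennreal k * (D p1 ?a + D p2 ?b)"
      using con ord[of n] by blast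
    thus ?thesis unfolding d_def using fp by (simp add: sym)
  qed
  have d0: "d 0 < \<infinity>" using fin p unfolding d_def D_plus_def by (simp add: sym)
  have dc: "d \<longlonglongrightarrow> 0" by (rule geo_conv[OF step d0 k])
  show ?thesis unfolding p fst_conv snd_conv
    by (intro conjI; rule tendsto_sandwich[OF _ _ tendsto_const dc]) (auto simp: d_def)
qed

theorem mainTheorem13:
  fixes D :: "'a::order \<Rightarrow> 'a \<Rightarrow> ennreal"
    and F :: "'a \<Rightarrow> 'a \<Rightarrow> 'a"
    and k :: real
    and w z zs :: "'a \<times> 'a"
  assumes "JS_metric D"
    and "mixed_monotone F"
    and "0 \<le> k" and "k < 1"
    and "\<forall>x y u v. u \<le> x \<and> y \<le> v \<longrightarrow>
           D (F x y) (F u v) + D (F y x) (F v u) \<le> ennreal k * (D x u + D y v)"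
    and "coupled_fixed_point F w" and "coupled_fixed_point F z"
    and "\<not> comparable2 w z"
    and "(le2 w zs \<and> le2 z zs) \<or> (le2 zs w \<and> le2 zs z)"
    and "D_plus D w zs < \<infinity>" and "D_plus D z zs < \<infinity>"
  shows "w = z"
proof -
  have "((\<lambda>n. D (fst (itF F zs n)) (fst w)) \<longlonglongrightarrow> 0 \<and> (\<lambda>n. D (snd (itF F zs n)) (snd w)) \<longlonglongrightarrow> 0)
      \<and> ((\<lambda>n. D (fst (itF F zs n)) (fst z)) \<longlonglongrightarrow> 0 \<and> (\<lambda>n. D (snd (itF F zs n)) (snd z)) \<longlonglongrightarrow> 0)"
    using assms(9)
  proof
    assume "le2 w zs \<and> le2 z zs"
    thus ?thesis using up_case[OF assms(1-5) assms(6) _ assms(10)] up_case[OF assms(1-5) assms(7) _ assms(11)] by blast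
  next
    assume "le2 zs w \<and> le2 zs z"
    thus ?thesis using down_case[OF assms(1-5) assms(6) _ assms(10)] down_case[OF assms(1-5) assms(7) _ assms(11)] by blast
  qed
  hence "fst w = fst z" "snd w = snd z" using uniq[OF assms(1), of "\<lambda>n. fst (itF F zs n)"] uniq[OF assms(1), of "\<lambda>n. snd (itF F zs n)"] by auto
  thus ?thesis by (simp add: prod_eq_iff)
qed

end
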